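(* Let $k$ be an infinite Brauer field of characteristic $0$, let $d\ge 1$, and assume that $\Sigma^*((d))$ holds. There is a constant $C(d)$ such that for every finite-dimensional $k$-vector space $V$ and every homogeneous polynomial $f$ of degree $d$ on $V$ that is diagonal of rank $>C(d)$, there is a three-dimensional subspace $E$ of $V$ such that $f|_E$ is good.
   Context: A field $k$ is a Brauer field if for every $d\ge 1$ there is $N_k(d)$ such that every equation $a_1x_1^d+\cdots+a_nx_n^d=0$ with $n>N_k(d)$, $a_i\in k$, has a non-trivial solution in $k^n$. A homogeneous polynomial $f$ of degree $d$ on $V$ is diagonal of rank $r$ if there are linear coordinates $x_1,\ldots,x_n$ on $V$ with $f=a_1x_1^d+\cdots+a_rx_r^d$ and $a_1,\ldots,a_r\in k$ all nonzero. A homogeneous polynomial $h$ of degree $d$ on a $3$-dimensional space is good if $h=xy^{d-1}+ay^d+bz^d$ for some coordinates $x,y,z$, some $a\in k$, $b\in k^{\times}$. Multi-degrees are tuples $(e_1\ge\cdots\ge e_s\ge 1)$ compared lexicographically (a proper initial segment being smaller). Strength: for a homogeneous $f$ of degree $d>0$, $\operatorname{str}(f)$ is the minimal $s$ with $f=\sum_{t=1}^s g_th_t$, $g_t,h_t$ homogeneous over $k$ of degrees $<d$; the strength of a tuple is the minimal strength of a nontrivial $k$-linear combination of its members of equal degree. $\Sigma(\underline{e})$ is the statement: there is a constant $C$ such that for every finite-dimensional $k$-vector space $U$ and every tuple $\underline{g}$ of homogeneous polynomials on $U$ of multi-degree $\underline{e}$ with $\operatorname{str}(\underline{g})>C$,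 the $k$-points of the common zero locus $Z(\underline{g})$ are Zariski dense in $Z(\underline{g})$. $\Sigma^*((d))$ is the statement that $\Sigma(\underline{e})$ holds for every multi-degree $\underline{e}<(d)$, i.e. every multi-degree with first entry $<d$. *)

theory Defs
  imports "HOL-Library.Poly_Mapping" "HOL-Algebra.Algebraic_Closure_Type"
begin

text \<open>A polynomial "on an n-dimensional space" is one whose variables are among 0..n-1.\<close>

type_synonym 'a mpoly = "(nat \<Rightarrow>\<^sub>0 nat) \<Rightarrow>\<^sub>0 'a"

definition mdeg :: "(nat \<Rightarrow>\<^sub>0 nat) \<Rightarrow> nat" where
  "mdeg m = (\<Sum>i\<in>Poly_Mapping.keys m. Poly_Mapping.lookup m i)"

definition homogeneous :: "nat \<Rightarrow> 'a::zero mpoly \<Rightarrow> bool" where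
  "homogeneous e p \<longleftrightarrow> (\<forall>m\<in>Poly_Mapping.keys p. mdeg m = e)"

definition in_vars :: "nat \<Rightarrow> 'a::zero mpoly \<Rightarrow> bool" where
  "in_vars n p \<longleftrightarrow> (\<forall>m\<in>Poly_Mapping.keys p. Poly_Mapping.keys m \<subseteq> {..<n})"

definition Var :: "nat \<Rightarrow> 'a::{zero,one} mpoly" where
  "Var i = Poly_Mapping.single (Poly_Mapping.single i 1) 1"

definition Const :: "'a::zero \<Rightarrow> 'a mpoly" where
  "Const c = Poly_Mapping.single 0 c"

text \<open>Evaluation of a polynomial after applying a coefficient map phi; with phi = Const
  and x = linear forms this is substitution (composition with a linear map).\<close>
definition eval_hom :: "('a::zero \<Rightarrow> 'b::comm_semiring_1) \<Rightarrow> (nat \<Rightarrow> 'b) \<Rightarrow> 'a mpoly \<Rightarrow> 'b" where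
  "eval_hom phi x p = (\<Sum>m\<in>Poly_Mapping.keys p. phi (Poly_Mapping.lookup p m) * (\<Prod>i\<in>Poly_Mapping.keys m. x i ^ Poly_Mapping.lookup m i))"

definition brauer_field :: "'k::field itself \<Rightarrow> bool" where
  "brauer_field _ \<longleftrightarrow> (\<forall>d::nat\<ge>1. \<exists>N::nat. \<forall>n>N. \<forall>a::nat \<Rightarrow> 'k.
      \<exists>x::nat \<Rightarrow> 'k. (\<exists>i<n. x i \<noteq> 0) \<and> (\<Sum>i<n. a i * x i ^ d) = 0)"

definition str_le :: "nat \<Rightarrow> nat \<Rightarrow> 'k::comm_ring_1 mpoly \<Rightarrow> nat \<Rightarrow> bool" where
  "str_le n d f s \<longleftrightarrow> (\<exists>(g::nat \<Rightarrow> 'k mpoly) (h::nat \<Rightarrow> 'k mpoly) (a::nat \<Rightarrow> nat) (b::nat \<Rightarrow> nat).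
      f = (\<Sum>t<s. g t * h t) \<and>
      (\<forall>t<s. homogeneous (a t) (g t) \<and> homogeneous (b t) (h t) \<and> a t < d \<and> b t < d
             \<and> in_vars n (g t) \<and> in_vars n (h t)))"

definition strength :: "nat \<Rightarrow> nat \<Rightarrow> 'k::comm_ring_1 mpoly \<Rightarrow> nat" where
  "strength n d f = (LEAST s. str_le n d f s)"

definition tuple_str_gt :: "nat \<Rightarrow> nat list \<Rightarrow> (nat \<Rightarrow> 'k::field mpoly) \<Rightarrow> nat \<Rightarrow> bool" where
  "tuple_str_gt n e g C \<longleftrightarrow> (\<forall>(c::nat \<Rightarrow> 'k) (\<delta>::nat).
      (\<exists>i<length e. e ! i = \<delta> \<and> c i \<noteq> 0) \<longrightarrow>
      strength n \<delta> (\<Sum>i\<in>{i. i < length e \<and> e ! i = \<delta>}. Const (c i) * g i) > C)"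

text \<open>The k-points of Z(g) are Zariski dense in Z(g) (a subset of kbar^n):
  every polynomial over kbar vanishing on the k-points of Z(g) vanishes on Z(g).\<close>
definition kpoints_dense :: "nat \<Rightarrow> nat \<Rightarrow> (nat \<Rightarrow> 'k::field mpoly) \<Rightarrow> bool" where
  "kpoints_dense n s g \<longleftrightarrow> (\<forall>h :: 'k alg_closure mpoly. in_vars n h \<longrightarrow>
      (\<forall>x::nat \<Rightarrow> 'k. (\<forall>i<s. eval_hom id x (g i) = 0) \<longrightarrow> eval_hom id (to_ac \<circ> x) h = 0) \<longrightarrow>
      (\<forall>y::nat \<Rightarrow> 'k alg_closure. (\<forall>i<s. eval_hom to_ac y (g i) = 0) \<longrightarrow> eval_hom id y h = 0))"

definition multidegree :: "nat list \<Rightarrow> bool" where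
  "multidegree e \<longleftrightarrow> e \<noteq> [] \<and> sorted_wrt (\<ge>) e \<and> (\<forall>x\<in>set e. x \<ge> 1)"

definition Sigma :: "'k::field itself \<Rightarrow> nat list \<Rightarrow> bool" where
  "Sigma _ e \<longleftrightarrow> (\<exists>C::nat. \<forall>(n::nat) (g::nat \<Rightarrow> 'k mpoly).
      (\<forall>i<length e. homogeneous (e ! i) (g i) \<and> in_vars n (g i)) \<and> tuple_str_gt n e g C
      \<longrightarrow> kpoints_dense n (length e) g)"

definition Sigma_star :: "'k::field itself \<Rightarrow> nat \<Rightarrow> bool" where
  "Sigma_star K d \<longleftrightarrow> (\<forall>e. multidegree e \<and> hd e < d \<longrightarrow> Sigma K e)"

text \<open>Linear coordinates: the linear forms l_i = sum_j M i j X_j (i<n) are linearly independent.\<close>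
definition lin_indep_rows :: "nat \<Rightarrow> nat \<Rightarrow> (nat \<Rightarrow> nat \<Rightarrow> 'k::field) \<Rightarrow> bool" where
  "lin_indep_rows r n M \<longleftrightarrow> (\<forall>c::nat \<Rightarrow> 'k. (\<forall>j<n. (\<Sum>i<r. c i * M i j) = 0) \<longrightarrow> (\<forall>i<r. c i = 0))"

definition lin_form :: "nat \<Rightarrow> (nat \<Rightarrow> 'k::field) \<Rightarrow> 'k mpoly" where
  "lin_form n v = (\<Sum>j<n. Const (v j) * Var j)"

definition diagonal_rank :: "nat \<Rightarrow> nat \<Rightarrow> 'k::field mpoly \<Rightarrow> nat \<Rightarrow> bool" where
  "diagonal_rank n d f r \<longleftrightarrow> (\<exists>(M::nat \<Rightarrow> nat \<Rightarrow> 'k) (a::nat \<Rightarrow> 'k).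
      r \<le> n \<and> lin_indep_rows n n M \<and> (\<forall>i<r. a i \<noteq> 0) \<and>
      f = (\<Sum>i<r. Const (a i) * lin_form n (M i) ^ d))"

definition good :: "nat \<Rightarrow> 'k::field mpoly \<Rightarrow> bool" where
  "good d h \<longleftrightarrow> (\<exists>(N::nat \<Rightarrow> nat \<Rightarrow> 'k) (a::'k) (b::'k). lin_indep_rows 3 3 N \<and> b \<noteq> 0 \<and>
      h = lin_form 3 (N 0) * lin_form 3 (N 1) ^ (d - 1) + Const a * lin_form 3 (N 1) ^ d
          + Const b * lin_form 3 (N 2) ^ d)"

text \<open>Restriction of f (on k^n) to the span E of v 0, v 1, v 2, written in the coordinates
  given by this basis of E.\<close>
definition restrict3 :: "nat \<Rightarrow> (nat \<Rightarrow> nat \<Rightarrow> 'k::field) \<Rightarrow> 'k mpoly \<Rightarrow> 'k mpoly" where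
  "restrict3 n v f = eval_hom Const (\<lambda>j. \<Sum>t<3. Const (v t j) * Var t) f"

end

theory Submission
  imports Defs "Jordan_Normal_Form.Determinant"
begin

definition mono_ev :: "(nat \<Rightarrow> 'b::comm_semiring_1) \<Rightarrow> (nat \<Rightarrow>\<^sub>0 nat) \<Rightarrow> 'b" where
  "mono_ev x m = (\<Prod>i\<in>Poly_Mapping.keys m. x i ^ Poly_Mapping.lookup m i)"

lemma mono_ev_superset:
  assumes "finite S" "Poly_Mapping.keys m \<subseteq> S"
  shows "mono_ev x m = (\<Prod>i\<in>S. x i ^ Poly_Mapping.lookup m i)"
  unfolding mono_ev_def
  by (rule prod.mono_neutral_left) (use assms in \<open>auto simp: in_keys_iff\<close>)

lemma mono_ev_add: "mono_ev x (m1 + m2) = mono_ev x m1 * mono_ev x m2"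
proof -
  let ?S = "Poly_Mapping.keys m1 \<union> Poly_Mapping.keys m2"
  have k: "Poly_Mapping.keys (m1 + m2) \<subseteq> ?S" by (rule keys_add)
  have "mono_ev x (m1 + m2) = (\<Prod>i\<in>?S. x i ^ Poly_Mapping.lookup (m1 + m2) i)"
    by (rule mono_ev_superset) (use k in auto)
  also have "\<dots> = (\<Prod>i\<in>?S. x i ^ Poly_Mapping.lookup m1 i * x i ^ Poly_Mapping.lookup m2 i)"
    by (simp add: lookup_add power_add)
  also have "\<dots> = (\<Prod>i\<in>?S. x i ^ Poly_Mapping.lookup m1 i) * (\<Prod>i\<in>?S. x i ^ Poly_Mapping.lookup m2 i)"
    by (rule prod.distrib)
  also have "\<dots> = mono_ev x m1 * mono_ev x m2"
    by (simp add: mono_ev_superset[symmetric])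
  finally show ?thesis .
qed

lemma mono_ev_zero[simp]: "mono_ev x 0 = 1"
  by (simp add: mono_ev_def)

lemma eval_hom_mono: "eval_hom phi x p = (\<Sum>m\<in>Poly_Mapping.keys p. phi (Poly_Mapping.lookup p m) * mono_ev x m)"
  by (simp add: eval_hom_def mono_ev_def)

locale coeff_hom =
  fixes phi :: "'a::comm_semiring_1 \<Rightarrow> 'b::comm_semiring_1"
  assumes phi0: "phi 0 = 0" and phi1: "phi 1 = 1"
    and phiadd: "\<And>a b. phi (a + b) = phi a + phi b"
    and phimult: "\<And>a b. phi (a * b) = phi a * phi b"
begin

lemma eval_superset:
  assumes "finite S" "Poly_Mapping.keys p \<subseteq> S"
  shows "eval_hom phi x p = (\<Sum>m\<in>S. phi (Poly_Mapping.lookup p m) * mono_ev x m)"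
  unfolding eval_hom_mono
  by (rule sum.mono_neutral_left) (use assms in \<open>auto simp: in_keys_iff phi0\<close>)

lemma eval_add: "eval_hom phi x (p + q) = eval_hom phi x p + eval_hom phi x q"
proof -
  let ?S = "Poly_Mapping.keys p \<union> Poly_Mapping.keys q"
  have "eval_hom phi x (p + q) = (\<Sum>m\<in>?S. phi (Poly_Mapping.lookup (p + q) m) * mono_ev x m)"
    using keys_add[of p q] by (intro eval_superset) auto
  also have "\<dots> = (\<Sum>m\<in>?S. phi (Poly_Mapping.lookup p m) * mono_ev x m + phi (Poly_Mapping.lookup q m) * mono_ev x m)"
    by (simp add: lookup_add phiadd distrib_right)
  also have "\<dots> = eval_hom phi x p + eval_hom phi x q"
    by (simp add: sum.distrib eval_superset[of ?S p] eval_superset[of ?S q])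
  finally show ?thesis .
qed

lemma eval_zero[simp]: "eval_hom phi x 0 = 0"
  by (simp add: eval_hom_def)

lemma eval_single: "eval_hom phi x (Poly_Mapping.single m c) = phi c * mono_ev x m"
  by (subst eval_superset[of "{m}"]) auto

lemma eval_sum: "eval_hom phi x (\<Sum>i\<in>A. f i) = (\<Sum>i\<in>A. eval_hom phi x (f i))"
  by (induction A rule: infinite_finite_induct) (auto simp: eval_add)

lemma decomp: "p = (\<Sum>m\<in>Poly_Mapping.keys p. Poly_Mapping.single m (Poly_Mapping.lookup p m))"
proof (rule poly_mapping_eqI)
  fix k
  show "Poly_Mapping.lookup p k = Poly_Mapping.lookup (\<Sum>m\<in>Poly_Mapping.keys p. Poly_Mapping.single m (Poly_Mapping.lookup p m)) k"
    by (simp add: lookup_sum lookup_single when_def in_keys_iff)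
qed

lemma eval_mult: "eval_hom phi x (p * q) = eval_hom phi x p * eval_hom phi x q"
proof -
  let ?P = "Poly_Mapping.keys p" and ?Q = "Poly_Mapping.keys q"
  have "p * q = (\<Sum>m\<in>?P. Poly_Mapping.single m (Poly_Mapping.lookup p m)) * (\<Sum>m\<in>?Q. Poly_Mapping.single m (Poly_Mapping.lookup q m))"
    using decomp[of p] decomp[of q] by simp
  also have "\<dots> = (\<Sum>m\<in>?P. \<Sum>m'\<in>?Q. Poly_Mapping.single (m + m') (Poly_Mapping.lookup p m * Poly_Mapping.lookup q m'))"
    by (simp add: sum_distrib_left sum_distrib_right mult_single) (rule sum.swap)
  finally have "eval_hom phi x (p * q) = (\<Sum>m\<in>?P. \<Sum>m'\<in>?Q. phi (Poly_Mapping.lookup p m) * mono_ev x m * (phi (Poly_Mapping.lookup q m') * mono_ev x m'))"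
    by (simp add: eval_sum eval_single phimult mono_ev_add mult_ac)
  also have "\<dots> = eval_hom phi x p * eval_hom phi x q"
    by (simp add: eval_hom_mono sum_distrib_left sum_distrib_right) (rule sum.swap)
  finally show ?thesis .
qed

lemma eval_one[simp]: "eval_hom phi x 1 = 1"
  using eval_single[of x 0 1] by (simp add: phi1 flip: single_one)

lemma eval_power: "eval_hom phi x (p ^ k) = eval_hom phi x p ^ k"
  by (induction k) (auto simp: eval_mult)

lemma eval_Const: "eval_hom phi x (Const c) = phi c"
  by (simp add: Const_def eval_single)

lemma eval_Var: "eval_hom phi x (Var i) = x i"
  by (simp add: Var_def eval_single phi1 mono_ev_def)

end

lemma Const_hom: "coeff_hom (Const :: 'a::comm_semiring_1 \<Rightarrow> 'a mpoly)"
  by unfold_locales (simp_all add: Const_def single_add mult_single flip: single_one)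


context coeff_hom
begin

lemma phi_sum: "phi (\<Sum>i\<in>A. f i) = (\<Sum>i\<in>A. phi (f i))"
  by (induction A rule: infinite_finite_induct) (auto simp: phi0 phiadd)

lemma phi_pow: "phi (x ^ k) = phi x ^ k"
  by (induction k) (auto simp: phi1 phimult)

lemma poly_id:
  "(\<Sum>i\<in>S. phi (a i) * (phi (x i) * PX + phi (z i) * PY)^d)
   = (\<Sum>j\<le>d. of_nat (d choose j) * phi (\<Sum>i\<in>S. a i * z i^j * x i^(d-j)) * PY^j * PX^(d-j))"
proof -
  have "(\<Sum>i\<in>S. phi (a i) * (phi (x i) * PX + phi (z i) * PY)^d)
     = (\<Sum>i\<in>S. \<Sum>j\<le>d. of_nat (d choose j) * phi (a i * z i^j * x i^(d-j)) * PY^j * PX^(d-j))"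
  proof (rule sum.cong[OF refl])
    fix i
    have "(phi (x i) * PX + phi (z i) * PY)^d = (phi (z i) * PY + phi (x i) * PX)^d" by (simp add: add.commute)
    also have "\<dots> = (\<Sum>j\<le>d. of_nat (d choose j) * (phi (z i) * PY)^j * (phi (x i) * PX)^(d-j))"
      by (rule binomial_ring)
    finally show "phi (a i) * (phi (x i) * PX + phi (z i) * PY)^d
       = (\<Sum>j\<le>d. of_nat (d choose j) * phi (a i * z i^j * x i^(d-j)) * PY^j * PX^(d-j))"
      by (simp add: sum_distrib_left phimult phi_pow power_mult_distrib mult_ac)
  qed
  also have "\<dots> = (\<Sum>j\<le>d. \<Sum>i\<in>S. of_nat (d choose j) * phi (a i * z i^j * x i^(d-j)) * PY^j * PX^(d-j))"
    by (rule sum.swap)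
  also have "\<dots> = (\<Sum>j\<le>d. of_nat (d choose j) * phi (\<Sum>i\<in>S. a i * z i^j * x i^(d-j)) * PY^j * PX^(d-j))"
    by (simp add: phi_sum sum_distrib_left sum_distrib_right)
  finally show ?thesis .
qed

end

lemma sum3: "(\<Sum>t<(3::nat). g t) = g 0 + g 1 + (g 2 :: 'a::comm_monoid_add)"
  by (simp add: eval_nat_numeral add_ac)

lemma Const_of_nat: "Const (of_nat m) = of_nat m"
  by (simp add: Const_def)

lemma Const_zero[simp]: "Const 0 = 0"
  by (simp add: Const_def)

lemma Const_one[simp]: "Const 1 = 1"
  by (simp add: Const_def)

lemma shift_mom:
  fixes w c :: "nat \<Rightarrow> 'k::comm_ring_1"
  shows "(\<Sum>i\<in>S. w i * (c i + \<sigma>)^j) = (\<Sum>m\<le>j. of_nat (j choose m) * \<sigma>^(j-m) * (\<Sum>i\<in>S. w i * c i^m))"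
proof -
  have "(\<Sum>i\<in>S. w i * (c i + \<sigma>)^j) = (\<Sum>i\<in>S. \<Sum>m\<le>j. of_nat (j choose m) * \<sigma>^(j-m) * (w i * c i^m))"
    by (simp add: binomial_ring sum_distrib_left mult_ac)
  also have "\<dots> = (\<Sum>m\<le>j. \<Sum>i\<in>S. of_nat (j choose m) * \<sigma>^(j-m) * (w i * c i^m))"
    by (rule sum.swap)
  also have "\<dots> = (\<Sum>m\<le>j. of_nat (j choose m) * \<sigma>^(j-m) * (\<Sum>i\<in>S. w i * c i^m))"
    by (simp add: sum_distrib_left)
  finally show ?thesis .
qed

lemma sum_from_l:
  fixes M :: "nat \<Rightarrow> 'k::comm_ring_1"
  assumes "\<forall>m<l. M m = 0"
  shows "(\<Sum>m\<le>j. f m * M m) = (\<Sum>m\<in>{l..j}. f m * M m)"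
  by (rule sum.mono_neutral_right) (use assms in auto)

lemma sum_blocks:
  fixes f :: "nat \<Rightarrow> 'k::comm_monoid_add"
  shows "(\<Sum>i\<in>{s..<s+K*L}. f i) = (\<Sum>k<K. \<Sum>i\<in>{s+k*L..<s+k*L+L}. f i)"
proof (induction K)
  case 0 then show ?case by simp
next
  case (Suc K)
  have e: "s+Suc K*L = s+K*L+L" by simp
  have "(\<Sum>i\<in>{s..<s+K*L}. f i) + (\<Sum>i\<in>{s+K*L..<s+K*L+L}. f i) = (\<Sum>i\<in>{s..<s+K*L+L}. f i)"
    by (rule sum.atLeastLessThan_concat) auto
  then have "(\<Sum>i\<in>{s..<s+Suc K*L}. f i) = (\<Sum>i\<in>{s..<s+K*L}. f i) + (\<Sum>i\<in>{s+K*L..<s+K*L+L}. f i)"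
    by (simp only: e)
  then show ?case using Suc by simp
qed

lemma blk_div:
  fixes L s k i :: nat
  assumes "L > 0" "s + k*L \<le> i" "i < s + k*L + L"
  shows "(i - s) div L = k"
proof -
  define t where "t = i - s - k*L"
  have t1: "i - s = t + k*L" using assms unfolding t_def by arith
  have t2: "t < L" using assms unfolding t_def by arith
  note t = t1 t2
  then show ?thesis using assms(1) by simp
qed

definition mom :: "(nat \<Rightarrow> 'k::comm_ring_1) \<Rightarrow> nat \<Rightarrow> (nat \<Rightarrow> 'k) \<Rightarrow> (nat \<Rightarrow> 'k) \<Rightarrow> nat set \<Rightarrow> nat \<Rightarrow> 'k" where
  "mom a d u c S j = (\<Sum>i\<in>S. a i * u i ^ d * c i ^ j)"

lemma gadget:
  fixes a :: "nat \<Rightarrow> 'k::field_char_0"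
  assumes K: "K > 0"
    and br: "\<forall>b::nat\<Rightarrow>'k. \<exists>lm. (\<exists>i<K. lm i \<noteq> 0) \<and> (\<Sum>i<K. b i * lm i ^ d) = 0"
  shows "\<forall>s. (\<forall>i\<in>{s..<s+K^l}. a i \<noteq> 0) \<longrightarrow> (\<exists>u c. (\<forall>i. i \<notin> {s..<s+K^l} \<longrightarrow> u i = 0)
           \<and> (\<forall>j<l. mom a d u c {s..<s+K^l} j = 0) \<and> mom a d u c {s..<s+K^l} l \<noteq> 0)"
proof (induction l)
  case 0
  show ?case
  proof (intro allI impI)
    fix s assume as: "\<forall>i\<in>{s..<s+K^0}. a i \<noteq> 0"
    show "\<exists>u c. (\<forall>i. i \<notin> {s..<s+K^0} \<longrightarrow> u i = 0)
           \<and> (\<forall>j<0. mom a d u c {s..<s+K^0} j = 0) \<and> mom a d u c {s..<s+K^0} 0 \<noteq> 0"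
      by (rule exI[of _ "\<lambda>i. if i = s then 1 else 0"], rule exI[of _ "\<lambda>i. 0"])
        (use as in \<open>auto simp: mom_def\<close>)
  qed
next
  case (Suc l)
  define L where "L = K^l"
  have L0: "L > 0" using K by (simp add: L_def)
  have KL: "K^Suc l = K * L" by (simp add: L_def)
  show ?case
  proof (intro allI impI)
    fix s assume as: "\<forall>i\<in>{s..<s+K^Suc l}. a i \<noteq> 0"
    define B where "B k = {s+k*L..<s+k*L+L}" for k
    have "\<forall>k. k < K \<longrightarrow> (\<exists>u c. (\<forall>i. i \<notin> B k \<longrightarrow> u i = 0)
           \<and> (\<forall>j<l. mom a d u c (B k) j = 0) \<and> mom a d u c (B k) l \<noteq> 0)"
    proof (intro allI impI)
      fix k assume k: "k < K"
      have "s + k*L + L \<le> s + K*L"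
        proof -
        have "Suc k * L \<le> K * L" using k by (intro mult_le_mono1) auto
        then show ?thesis by simp
      qed
      then have "\<forall>i\<in>{s+k*L..<s+k*L+K^l}. a i \<noteq> 0" using as KL L_def by auto
      then show "\<exists>u c. (\<forall>i. i \<notin> B k \<longrightarrow> u i = 0)
           \<and> (\<forall>j<l. mom a d u c (B k) j = 0) \<and> mom a d u c (B k) l \<noteq> 0"
        using Suc.IH unfolding B_def L_def by blast
    qed
    then have "\<forall>k\<in>{..<K}. \<exists>p. (\<forall>i. i \<notin> B k \<longrightarrow> fst p i = 0)
           \<and> (\<forall>j<l. mom a d (fst p) (snd p) (B k) j = 0) \<and> mom a d (fst p) (snd p) (B k) l \<noteq> 0"
      by auto
    then obtain F where F: "\<forall>k\<in>{..<K}. (\<forall>i. i \<notin> B k \<longrightarrow> fst (F k) i = 0)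
           \<and> (\<forall>j<l. mom a d (fst (F k)) (snd (F k)) (B k) j = 0) \<and> mom a d (fst (F k)) (snd (F k)) (B k) l \<noteq> 0"
      by (rule bchoice[elim_format]) blast
    define U where "U k = fst (F k)" for k
    define C where "C k = snd (F k)" for k
    have UC: "\<And>k. k < K \<Longrightarrow> (\<forall>i. i \<notin> B k \<longrightarrow> U k i = 0)
           \<and> (\<forall>j<l. mom a d (U k) (C k) (B k) j = 0) \<and> mom a d (U k) (C k) (B k) l \<noteq> 0"
      using F unfolding U_def C_def by blast
    define \<beta> where "\<beta> k = mom a d (U k) (C k) (B k) l" for k
    obtain lm where lam: "\<exists>i<K. lm i \<noteq> 0" "(\<Sum>k<K. \<beta> k * lm k ^ d) = 0"
      using br by blast
    then obtain k0 where k0: "k0 < K" "lm k0 \<noteq> 0" by blast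
    define A where "A = (\<Sum>k<K. lm k ^ d * mom a d (U k) (C k) (B k) (Suc l))"
    define \<sigma> where "\<sigma> = (if A = 0 then (1::'k) else 0)"
    define sg where "sg k = (if k = k0 then \<sigma> else 0)" for k
    define blk where "blk i = (i - s) div L" for i
    define u where "u i = (if i \<in> {s..<s+K*L} then lm (blk i) * U (blk i) i else 0)" for i
    define c where "c i = C (blk i) i + sg (blk i)" for i
    have blkB: "blk i = k" if "i \<in> B k" for i k
      using that blk_div[OF L0] unfolding blk_def B_def by auto
    have BsubS: "B k \<subseteq> {s..<s+K*L}" if "k < K" for k
    proof -
      have "s + k*L + L \<le> s + K*L"
        proof -
        have "Suc k * L \<le> K * L" using that by (intro mult_le_mono1) auto
        then show ?thesis by simp
      qed
      then show ?thesis unfolding B_def by auto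
    qed
    have shifted: "(\<Sum>i\<in>B k. a i * U k i ^ d * (C k i + sg k) ^ j) =
        (\<Sum>m\<le>j. of_nat (j choose m) * sg k^(j-m) * mom a d (U k) (C k) (B k) m)" for k j
      unfolding mom_def by (rule shift_mom)
    have momsplit: "mom a d u c {s..<s+K*L} j = (\<Sum>k<K. lm k ^ d * (\<Sum>m\<le>j. of_nat (j choose m) * sg k^(j-m) * mom a d (U k) (C k) (B k) m))" for j
    proof -
      have "mom a d u c {s..<s+K*L} j = (\<Sum>k<K. \<Sum>i\<in>B k. a i * u i ^ d * c i ^ j)"
        unfolding mom_def B_def by (rule sum_blocks)
      also have "\<dots> = (\<Sum>k<K. lm k ^ d * (\<Sum>i\<in>B k. a i * U k i ^ d * (C k i + sg k) ^ j))"
      proof (rule sum.cong[OF refl])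
        fix k assume "k \<in> {..<K}"
        then have k: "k < K" by simp
        have "(\<Sum>i\<in>B k. a i * u i ^ d * c i ^ j) = (\<Sum>i\<in>B k. lm k ^ d * (a i * U k i ^ d * (C k i + sg k) ^ j))"
        proof (rule sum.cong[OF refl])
          fix i assume i: "i \<in> B k"
          then have "i \<in> {s..<s+K*L}" using BsubS[OF k] by auto
          then show "a i * u i ^ d * c i ^ j = lm k ^ d * (a i * U k i ^ d * (C k i + sg k) ^ j)"
            using blkB[OF i] unfolding u_def c_def by (simp add: power_mult_distrib)
        qed
        then show "(\<Sum>i\<in>B k. a i * u i ^ d * c i ^ j) = lm k ^ d * (\<Sum>i\<in>B k. a i * U k i ^ d * (C k i + sg k) ^ j)"
          by (simp add: sum_distrib_left)
      qed
      also have "\<dots> = (\<Sum>k<K. lm k ^ d * (\<Sum>m\<le>j. of_nat (j choose m) * sg k^(j-m) * mom a d (U k) (C k) (B k) m))"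
        by (simp add: shifted)
      finally show ?thesis .
    qed
    have inner: "(\<Sum>m\<le>j. of_nat (j choose m) * sg k^(j-m) * mom a d (U k) (C k) (B k) m)
         = (\<Sum>m\<in>{l..j}. of_nat (j choose m) * sg k^(j-m) * mom a d (U k) (C k) (B k) m)" if "k < K" for k j
      by (rule sum_from_l) (use UC[OF that] in auto)
    have lowj: "mom a d u c {s..<s+K*L} j = 0" if "j < l" for j
      using that by (simp add: momsplit inner)
    have lj: "mom a d u c {s..<s+K*L} l = 0"
    proof -
      have "mom a d u c {s..<s+K*L} l = (\<Sum>k<K. lm k ^ d * \<beta> k)"
        by (simp add: momsplit inner \<beta>_def)
      then show ?thesis using lam(2) by (simp add: mult.commute)
    qed
    have sj: "mom a d u c {s..<s+K*L} (Suc l) = A + of_nat (Suc l) * \<sigma> * (lm k0 ^ d * \<beta> k0)"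
    proof -
      have e: "{l..Suc l} = {l, Suc l}" by auto
      have "mom a d u c {s..<s+K*L} (Suc l) = (\<Sum>k<K. lm k ^ d * (of_nat (Suc l) * sg k * \<beta> k + mom a d (U k) (C k) (B k) (Suc l)))"
      proof -
        have "(\<Sum>m\<le>Suc l. of_nat (Suc l choose m) * sg k^(Suc l-m) * mom a d (U k) (C k) (B k) m)
            = of_nat (Suc l) * sg k * \<beta> k + mom a d (U k) (C k) (B k) (Suc l)" if "k < K" for k
          unfolding inner[OF that] e by (simp add: \<beta>_def)
        then show ?thesis unfolding momsplit by (intro sum.cong) auto
      qed
      also have "\<dots> = (\<Sum>k<K. of_nat (Suc l) * (lm k ^ d * sg k * \<beta> k)) + A"
        by (simp add: A_def sum.distrib algebra_simps)
      also have "(\<Sum>k<K. of_nat (Suc l) * (lm k ^ d * sg k * \<beta> k)) = of_nat (Suc l) * (lm k0 ^ d * \<sigma> * \<beta> k0)"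
      proof -
        have "(\<Sum>k<K. lm k ^ d * sg k * \<beta> k) = (\<Sum>k<K. if k = k0 then lm k0 ^ d * \<sigma> * \<beta> k0 else 0)"
          by (intro sum.cong) (auto simp: sg_def)
        also have "\<dots> = lm k0 ^ d * \<sigma> * \<beta> k0" using k0(1) by simp
        finally show ?thesis by (simp add: sum_distrib_left[symmetric])
      qed
      finally show ?thesis by (simp add: algebra_simps)
    qed
    have "\<beta> k0 \<noteq> 0" using UC[OF k0(1)] by (simp add: \<beta>_def)
    then have "mom a d u c {s..<s+K*L} (Suc l) \<noteq> 0"
      using k0(2) of_nat_neq_0[of l, where 'a='k] by (simp add: sj \<sigma>_def)
    moreover have "\<forall>i. i \<notin> {s..<s+K*L} \<longrightarrow> u i = 0" by (simp add: u_def)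
    moreover have "\<forall>j<Suc l. mom a d u c {s..<s+K*L} j = 0"
      using lowj lj less_Suc_eq by auto
    ultimately show "\<exists>u c. (\<forall>i. i \<notin> {s..<s+K^Suc l} \<longrightarrow> u i = 0)
           \<and> (\<forall>j<Suc l. mom a d u c {s..<s+K^Suc l} j = 0) \<and> mom a d u c {s..<s+K^Suc l} (Suc l) \<noteq> 0"
      unfolding KL by blast
  qed
qed


lemma solve_lin:
  fixes M :: "nat \<Rightarrow> nat \<Rightarrow> 'k::field"
  assumes indep: "\<forall>c::nat \<Rightarrow> 'k. (\<forall>j<n. (\<Sum>i<n. c i * M i j) = 0) \<longrightarrow> (\<forall>i<n. c i = 0)"
  shows "\<exists>w. (\<forall>j. n \<le> j \<longrightarrow> w j = 0) \<and> (\<forall>i<n. (\<Sum>j<n. M i j * w j) = y i)"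
proof -
  define A where "A = mat n n (\<lambda>(i,j). M i j)"
  have A: "A \<in> carrier_mat n n" by (simp add: A_def)
  have detA: "det A \<noteq> 0"
  proof
    assume "det A = 0"
    then have "det (transpose_mat A) = 0" using det_transpose[OF A] by simp
    then obtain v where v: "v \<in> carrier_vec n" "v \<noteq> 0\<^sub>v n" "transpose_mat A *\<^sub>v v = 0\<^sub>v n"
      using det_0_iff_vec_prod_zero[of "transpose_mat A" n] A by auto
    have "\<forall>j<n. (\<Sum>i<n. v $ i * M i j) = 0"
    proof (intro allI impI)
      fix j assume j: "j < n"
      have "(transpose_mat A *\<^sub>v v) $ j = 0" using v(3) j by simp
      then show "(\<Sum>i<n. v $ i * M i j) = 0"
        using j v(1) A by (simp add: scalar_prod_def A_def atLeast0LessThan mult.commute)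
    qed
    then have "\<forall>i<n. v $ i = 0" using indep by blast
    then have "v = 0\<^sub>v n" using v(1) by (intro eq_vecI) auto
    then show False using v(2) by simp
  qed
  define B where "B = inverse (det A) \<cdot>\<^sub>m adj_mat A"
  have B: "B \<in> carrier_mat n n" using adj_mat(1)[OF A] by (simp add: B_def)
  have AB: "A * B = 1\<^sub>m n"
  proof -
    have "A * B = inverse (det A) \<cdot>\<^sub>m (A * adj_mat A)"
      unfolding B_def by (rule mult_smult_distrib[OF A adj_mat(1)[OF A]])
    also have "\<dots> = inverse (det A) \<cdot>\<^sub>m (det A \<cdot>\<^sub>m 1\<^sub>m n)" using adj_mat(2)[OF A] by simp
    also have "\<dots> = 1\<^sub>m n" using detA by (intro eq_matI) auto
    finally show ?thesis .
  qed
  define wv where "wv = B *\<^sub>v vec n y"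
  have Aw: "A *\<^sub>v wv = vec n y"
    unfolding wv_def using A B AB by (simp add: assoc_mult_mat_vec[symmetric, of A n n B n "vec n y"])
  define w where "w j = (if j < n then wv $ j else 0)" for j
  have "\<forall>i<n. (\<Sum>j<n. M i j * w j) = y i"
  proof (intro allI impI)
    fix i assume i: "i < n"
    have "(A *\<^sub>v wv) $ i = y i" using Aw i by simp
    moreover have "(A *\<^sub>v wv) $ i = (\<Sum>j<n. M i j * w j)"
      using i A B by (simp add: scalar_prod_def A_def atLeast0LessThan w_def wv_def)
    ultimately show "(\<Sum>j<n. M i j * w j) = y i" by simp
  qed
  then show ?thesis by (intro exI[of _ w]) (auto simp: w_def)
qed


theorem proposition5p1:
  fixes d :: nat
  assumes "infinite (UNIV :: 'k::field_char_0 set)"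
    and "brauer_field TYPE('k)"
    and "d \<ge> 1"
    and "Sigma_star TYPE('k) d"
  shows "\<exists>C::nat. \<forall>(n::nat) (f::'k mpoly).
           homogeneous d f \<and> in_vars n f \<and> (\<exists>r>C. diagonal_rank n d f r) \<longrightarrow>
           (\<exists>v::nat \<Rightarrow> nat \<Rightarrow> 'k. (\<forall>t<3. \<forall>j\<ge>n. v t j = 0) \<and> lin_indep_rows 3 n v
              \<and> good d (restrict3 n v f))"
proof -
  obtain e where de: "d = Suc e" using assms(3) by (cases d) auto
  from assms(2) obtain N where N: "\<forall>n>N. \<forall>a::nat\<Rightarrow>'k. \<exists>x. (\<exists>i<n. x i \<noteq> 0) \<and> (\<Sum>i<n. a i * x i ^ d) = 0"
    unfolding brauer_field_def using assms(3) by blast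
  define K where "K = Suc N"
  have K0: "K > 0" by (simp add: K_def)
  have br: "\<forall>b::nat\<Rightarrow>'k. \<exists>lm. (\<exists>i<K. lm i \<noteq> 0) \<and> (\<Sum>i<K. b i * lm i ^ d) = 0"
    using N lessI[of N] unfolding K_def by blast
  define G where "G = K ^ e"
  interpret coeff_hom "Const :: 'k \<Rightarrow> 'k mpoly" by (rule Const_hom)
  show ?thesis
  proof (rule exI[of _ "Suc G"], intro allI impI)
    fix n and f :: "'k mpoly"
    assume "homogeneous d f \<and> in_vars n f \<and> (\<exists>r>Suc G. diagonal_rank n d f r)"
    then obtain r where r: "r > Suc G" "diagonal_rank n d f r" by blast
    then obtain M a where Ma: "r \<le> n" "lin_indep_rows n n M" "\<forall>i<r. a i \<noteq> 0"
        "f = (\<Sum>i<r. Const (a i) * lin_form n (M i) ^ d)"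
      unfolding diagonal_rank_def by blast
    have "\<forall>i\<in>{0..<0+K^e}. a i \<noteq> 0" using Ma(3) r(1) by (auto simp: G_def)
    then have "\<exists>u c. (\<forall>i. i \<notin> {0..<0+K^e} \<longrightarrow> u i = 0)
           \<and> (\<forall>j<e. mom a d u c {0..<0+K^e} j = 0) \<and> mom a d u c {0..<0+K^e} e \<noteq> 0"
      using gadget[OF K0 br, of e] by blast
    then have "\<exists>u c. (\<forall>i. i \<notin> {0..<G} \<longrightarrow> u i = 0)
           \<and> (\<forall>j<e. mom a d u c {0..<G} j = 0) \<and> mom a d u c {0..<G} e \<noteq> 0"
      by (simp only: G_def add_0)
    then obtain u c where uc: "\<forall>i. i \<notin> {0..<G} \<longrightarrow> u i = 0" "\<forall>j<e. mom a d u c {0..<G} j = 0"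
        "mom a d u c {0..<G} e \<noteq> 0"
      by blast
    define p where "p = G"
    define q where "q = Suc G"
    have pq: "p < r" "q < r" "p \<noteq> q" "u p = 0" "u q = 0" "p < n" "q < n"
      using r(1) Ma(1) uc(1) by (auto simp: p_def q_def)
    define y0 where "y0 i = u i" for i
    define y1 where "y1 i = c i * u i + (if i = q then 1 else 0)" for i
    define y2 where "y2 i = (if i = p then (1::'k) else 0)" for i
    have indM: "\<forall>cc::nat \<Rightarrow> 'k. (\<forall>j<n. (\<Sum>i<n. cc i * M i j) = 0) \<longrightarrow> (\<forall>i<n. cc i = 0)"
      using Ma(2) unfolding lin_indep_rows_def by blast
    obtain v0 where v0: "\<forall>j. n \<le> j \<longrightarrow> v0 j = 0" "\<forall>i<n. (\<Sum>j<n. M i j * v0 j) = y0 i"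
      using solve_lin[OF indM] by blast
    obtain v1 where v1: "\<forall>j. n \<le> j \<longrightarrow> v1 j = 0" "\<forall>i<n. (\<Sum>j<n. M i j * v1 j) = y1 i"
      using solve_lin[OF indM] by blast
    obtain v2 where v2: "\<forall>j. n \<le> j \<longrightarrow> v2 j = 0" "\<forall>i<n. (\<Sum>j<n. M i j * v2 j) = y2 i"
      using solve_lin[OF indM] by blast
    define v where "v t = (if t = 0 then v0 else if t = 1 then v1 else v2)" for t :: nat
    have vsupp: "\<forall>t<3. \<forall>j\<ge>n. v t j = 0" using v0 v1 v2 by (simp add: v_def)
    have vM: "(\<Sum>j<n. M i j * (\<Sum>t<3. g t * v t j)) = g 0 * y0 i + g 1 * y1 i + g 2 * y2 i"
      if i: "i < n" for i and g :: "nat \<Rightarrow> 'k"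
    proof -
      have "(\<Sum>j<n. M i j * (\<Sum>t<3. g t * v t j))
          = g 0 * (\<Sum>j<n. M i j * v0 j) + g 1 * (\<Sum>j<n. M i j * v1 j) + g 2 * (\<Sum>j<n. M i j * v2 j)"
        by (simp add: sum3 v_def distrib_left sum.distrib sum_distrib_left mult_ac)
      then show ?thesis using v0 v1 v2 i by simp
    qed
    have u_ne: "\<exists>i<G. u i \<noteq> 0"
    proof (rule ccontr)
      assume "\<not> (\<exists>i<G. u i \<noteq> 0)"
      then have "mom a d u c {0..<G} e = 0" by (simp add: mom_def de)
      then show False using uc(3) by simp
    qed
    have indep: "lin_indep_rows 3 n v"
      unfolding lin_indep_rows_def
    proof (intro allI impI)
      fix cc :: "nat \<Rightarrow> 'k" and t :: nat
      assume h: "\<forall>j<n. (\<Sum>t<3. cc t * v t j) = 0" and t: "t < 3"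
      have key: "cc 0 * y0 i + cc 1 * y1 i + cc 2 * y2 i = 0" if "i < n" for i
        using vM[OF that, of cc] h by simp
      have c2: "cc 2 = 0" using key[OF pq(6)] pq by (simp add: y0_def y1_def y2_def)
      have c1: "cc 1 = 0" using key[OF pq(7)] pq by (simp add: y0_def y1_def y2_def)
      obtain i0 where i0: "i0 < G" "u i0 \<noteq> 0" using u_ne by blast
      have "i0 < n" using i0(1) r(1) Ma(1) by linarith
      moreover have "i0 \<noteq> p" "i0 \<noteq> q" using i0(1) unfolding p_def q_def by simp_all
      ultimately have "i0 < n" "i0 \<noteq> p" "i0 \<noteq> q" by simp_all
      then have c0: "cc 0 = 0" using key[of i0] c1 c2 i0 by (simp add: y0_def)
      show "cc t = 0" using t c0 c1 c2 by (auto simp: eval_nat_numeral less_Suc_eq)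
    qed
    define Xs where "Xs j = (\<Sum>t<3. Const (v t j) * Var t)" for j
    have E: "restrict3 n v f = eval_hom Const Xs f" by (simp add: restrict3_def Xs_def[abs_def])
    have lf: "eval_hom Const Xs (lin_form n (M i)) = Const (y0 i) * Var 0 + Const (y1 i) * Var 1 + Const (y2 i) * Var 2"
      if i: "i < n" for i
    proof -
      have "eval_hom Const Xs (lin_form n (M i)) = (\<Sum>j<n. Const (M i j) * Xs j)"
        by (simp add: lin_form_def eval_sum eval_mult eval_Const eval_Var)
      also have "\<dots> = (\<Sum>j<n. Const (M i j * v 0 j) * Var 0 + Const (M i j * v 1 j) * Var 1 + Const (M i j * v 2 j) * Var 2)"
        by (simp add: Xs_def sum3 distrib_left phimult mult_ac)
      also have "\<dots> = Const (\<Sum>j<n. M i j * v 0 j) * Var 0 + Const (\<Sum>j<n. M i j * v 1 j) * Var 1 + Const (\<Sum>j<n. M i j * v 2 j) * Var 2"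
        by (simp add: sum.distrib phi_sum sum_distrib_right)
      also have "\<dots> = Const (y0 i) * Var 0 + Const (y1 i) * Var 1 + Const (y2 i) * Var 2"
        using v0 v1 v2 i by (simp add: v_def)
      finally show ?thesis .
    qed
    define V0 where "V0 = (Var 0 :: 'k mpoly)"
    define V1 where "V1 = (Var 1 :: 'k mpoly)"
    define V2 where "V2 = (Var 2 :: 'k mpoly)"
    define T where "T i = Const (a i) * (Const (y0 i) * V0 + Const (y1 i) * V1 + Const (y2 i) * V2) ^ d" for i
    have R1: "restrict3 n v f = (\<Sum>i<r. T i)"
    proof -
      have "eval_hom Const Xs f = (\<Sum>i<r. Const (a i) * eval_hom Const Xs (lin_form n (M i)) ^ d)"
        unfolding Ma(4) by (simp add: eval_sum eval_mult eval_power eval_Const)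
      then have "restrict3 n v f = (\<Sum>i<r. Const (a i) * eval_hom Const Xs (lin_form n (M i)) ^ d)"
        using E by simp
      also have "\<dots> = (\<Sum>i<r. T i)"
        using Ma(1) by (intro sum.cong) (auto simp: lf T_def V0_def V1_def V2_def)
      finally show ?thesis .
    qed
    define R' where "R' = {..<r} - {p}"
    have R2: "(\<Sum>i<r. T i) = T p + (\<Sum>i\<in>R'. T i)"
      unfolding R'_def using pq(1) by (simp add: sum.remove)
    have Tp: "T p = Const (a p) * V2 ^ d"
      using pq by (simp add: T_def y0_def y1_def y2_def)
    have TR: "(\<Sum>i\<in>R'. T i) = (\<Sum>i\<in>R'. Const (a i) * (Const (y0 i) * V0 + Const (y1 i) * V1) ^ d)"
      by (intro sum.cong) (auto simp: T_def y2_def R'_def)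
    define F where "F j = (\<Sum>i\<in>R'. a i * y1 i^j * y0 i^(d-j))" for j
    have PI: "(\<Sum>i\<in>R'. Const (a i) * (Const (y0 i) * V0 + Const (y1 i) * V1) ^ d)
        = (\<Sum>j\<le>d. of_nat (d choose j) * Const (F j) * V1^j * V0^(d-j))"
      unfolding F_def by (rule poly_id)
    have Fmom: "F j = mom a d u c {0..<G} j" if j: "j < d" for j
    proof -
      have sub: "{0..<G} \<subseteq> R'" using r(1) by (auto simp: R'_def p_def)
      have "F j = (\<Sum>i\<in>{0..<G}. a i * y1 i^j * y0 i^(d-j))"
        unfolding F_def
        by (rule sum.mono_neutral_right) (use sub uc(1) j in \<open>auto simp: R'_def y0_def\<close>)
      also have "\<dots> = mom a d u c {0..<G} j"
        unfolding mom_def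
      proof (intro sum.cong[OF refl])
        fix i assume "i \<in> {0..<G}"
        then have "i \<noteq> q" by (auto simp: q_def)
        then have "a i * y1 i^j * y0 i^(d-j) = a i * (c i ^ j * (u i ^ j * u i ^ (d - j)))"
          by (simp add: y1_def y0_def power_mult_distrib)
        also have "\<dots> = a i * u i ^ d * c i ^ j"
          using j by (simp add: power_add[symmetric])
        finally show "a i * y1 i^j * y0 i^(d-j) = a i * u i ^ d * c i ^ j" .
      qed
      finally show ?thesis .
    qed
    define S where "S j = of_nat (d choose j) * Const (F j) * V1^j * V0^(d-j)" for j
    have "(\<Sum>j\<le>d. S j) = (\<Sum>j<e. S j) + S e + S (Suc e)"
      by (simp add: de flip: lessThan_Suc_atMost)
    moreover have "(\<Sum>j<e. S j) = 0"
      using uc(2) by (intro sum.neutral) (auto simp: S_def Fmom de)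
    moreover have "S e = of_nat d * Const (mom a d u c {0..<G} e) * V1^e * V0"
      by (simp add: S_def Fmom de)
    moreover have "S (Suc e) = Const (F d) * V1^d"
      by (simp add: S_def de)
    ultimately have sumS: "(\<Sum>j\<le>d. S j) = of_nat d * Const (mom a d u c {0..<G} e) * V1^e * V0 + Const (F d) * V1^d"
      by simp
    define m where "m = mom a d u c {0..<G} e"
    define Nm where "Nm t j = (if t = 0 then (if j = 0 then of_nat d * m else 0)
        else if t = 1 then (if j = 1 then 1 else 0) else (if j = 2 then 1 else 0))" for t j :: nat
    have lf0: "lin_form 3 (Nm 0) = Const (of_nat d * m) * V0"
      by (simp add: lin_form_def sum3 Nm_def V0_def)
    have lf1: "lin_form 3 (Nm 1) = V1"
      by (simp add: lin_form_def sum3 Nm_def V1_def)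
    have lf2: "lin_form 3 (Nm 2) = V2"
      by (simp add: lin_form_def sum3 Nm_def V2_def)
    have m0: "m \<noteq> 0" using uc(3) by (simp add: m_def)
    have indN: "lin_indep_rows 3 3 Nm"
      unfolding lin_indep_rows_def
    proof (intro allI impI)
      fix cc :: "nat \<Rightarrow> 'k" and t :: nat
      assume h: "\<forall>j<3. (\<Sum>i<3. cc i * Nm i j) = 0" and t: "t < 3"
      have "cc 0 * (of_nat d * m) = 0" using h[rule_format, of 0] by (simp add: sum3 Nm_def)
      then have c0: "cc 0 = 0" using m0 de of_nat_neq_0[of e, where 'a='k] by simp
      have c1: "cc 1 = 0" using h[rule_format, of 1] by (simp add: sum3 Nm_def)
      have c2: "cc 2 = 0" using h[rule_format, of 2] by (simp add: sum3 Nm_def)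
      show "cc t = 0" using t c0 c1 c2 by (auto simp: eval_nat_numeral less_Suc_eq)
    qed
    have "restrict3 n v f = lin_form 3 (Nm 0) * lin_form 3 (Nm 1) ^ (d - 1) + Const (F d) * lin_form 3 (Nm 1) ^ d
          + Const (a p) * lin_form 3 (Nm 2) ^ d"
    proof -
      have "restrict3 n v f = Const (a p) * V2 ^ d + (of_nat d * Const m * V1^e * V0 + Const (F d) * V1^d)"
        using R1 R2 Tp TR PI sumS by (simp add: S_def m_def)
      also have "\<dots> = lin_form 3 (Nm 0) * lin_form 3 (Nm 1) ^ (d - 1) + Const (F d) * lin_form 3 (Nm 1) ^ d
          + Const (a p) * lin_form 3 (Nm 2) ^ d"
      proof -
        have cm: "Const (of_nat d * m) = of_nat d * Const m" by (simp only: phimult Const_of_nat)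
        show ?thesis unfolding lf0 lf1 lf2 cm by (simp add: de algebra_simps)
      qed
      finally show ?thesis .
    qed
    then have "good d (restrict3 n v f)"
      unfolding good_def using indN Ma(3) pq(1) by blast
    then show "\<exists>v::nat \<Rightarrow> nat \<Rightarrow> 'k. (\<forall>t<3. \<forall>j\<ge>n. v t j = 0) \<and> lin_indep_rows 3 n v
              \<and> good d (restrict3 n v f)"
      using vsupp indep by blast
  qed
qed

end
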